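(* Let $\sigma>0$, $k\in\{0,1,2\}$, $l\in\{0,1\}$, and let $f$ be $(\sigma',2)$-Gevrey regular on $[0,1]$ for some $\sigma'>\sigma$. If $u\in G_{\sigma,k,l}$ then $fu\in G_{\sigma,k,l}$ and $\|fu\|_{\sigma,k,l}\le C\|u\|_{\sigma,k,l}$, where $C$ depends only on $\sigma,\sigma',k,l$ and $f$.
   Context: Let $I=(0,1)$. A function $u\in C^\infty(\overline I)$ is $(\sigma,k)$-Gevrey regular ($\sigma,k>0$) if there is $C>0$ with $\sup_{x\in I}|u^{(n)}(x)|\le C\sigma^{-n}(n!)^k$ for all $n\ge0$. For $\sigma>0$, $u\in C^\infty(\overline I)$, $k\in\{0,1,2\}$, $l\in\{0,1\}$, set $|u|^{0}_{\sigma,k,l}=\big(\sum_{n=0}^\infty\frac{\sigma^{2n}}{n!^2(n+1)!^2}n^{k+l}\int_0^1(x/\sigma)^k|\partial_x^nu|^2dx\big)^{1/2}$ (with $0^0:=1$); $\|u\|_{\sigma,0,0}=|u|^0_{\sigma,0,0}$, and for $k+l>0$, $\|u\|_{\sigma,k,l}=|u|^0_{\sigma,k,l}+(\int_0^1(x/\sigma)^k|u|^2dx)^{1/2}$. $G_{\sigma,k,l}=\{u\in C^\infty(\overline I):\|u\|_{\sigma,k,l}<\infty\}$. *)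

theory Defs
  imports "HOL-Analysis.Analysis"
begin

definition dn :: "nat \<Rightarrow> (real \<Rightarrow> real) \<Rightarrow> real \<Rightarrow> real" where
  "dn n u = ((\<lambda>g x. vector_derivative g (at x within {0..1})) ^^ n) u"

definition smooth01 :: "(real \<Rightarrow> real) \<Rightarrow> bool" where
  "smooth01 u \<longleftrightarrow> (\<forall>n. \<forall>x\<in>{0..1::real}.
      (dn n u has_vector_derivative dn (Suc n) u x) (at x within {0..1}))"

definition gevrey_regular :: "real \<Rightarrow> real \<Rightarrow> (real \<Rightarrow> real) \<Rightarrow> bool" where
  "gevrey_regular \<sigma> k u \<longleftrightarrow> smooth01 u \<and>
     (\<exists>C. \<forall>n. \<forall>x\<in>{0<..<1::real}. \<bar>dn n u x\<bar> \<le> C * \<sigma> powr (- real n) * (fact n) powr k)"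

definition gterm :: "real \<Rightarrow> nat \<Rightarrow> nat \<Rightarrow> (real \<Rightarrow> real) \<Rightarrow> nat \<Rightarrow> real" where
  "gterm \<sigma> k l u n = \<sigma> ^ (2*n) / ((fact n)^2 * (fact (n+1))^2) * (real n) ^ (k+l)
      * integral {0..1} (\<lambda>x. (x/\<sigma>)^k * (dn n u x)^2)"

definition gseminorm :: "real \<Rightarrow> nat \<Rightarrow> nat \<Rightarrow> (real \<Rightarrow> real) \<Rightarrow> real" where
  "gseminorm \<sigma> k l u = sqrt (\<Sum>n. gterm \<sigma> k l u n)"

definition gnorm :: "real \<Rightarrow> nat \<Rightarrow> nat \<Rightarrow> (real \<Rightarrow> real) \<Rightarrow> real" where
  "gnorm \<sigma> k l u = (if k + l = 0 then gseminorm \<sigma> k l u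
     else gseminorm \<sigma> k l u + sqrt (integral {0..1} (\<lambda>x. (x/\<sigma>)^k * (u x)^2)))"

definition inG :: "real \<Rightarrow> nat \<Rightarrow> nat \<Rightarrow> (real \<Rightarrow> real) \<Rightarrow> bool" where
  "inG \<sigma> k l u \<longleftrightarrow> smooth01 u \<and> summable (gterm \<sigma> k l u)"

end

theory Submission
  imports Defs "HOL-Real_Asymp.Real_Asymp"
begin


lemma dn_0[simp]: "dn 0 u = u" by (simp add: dn_def)
lemma dn_Suc: "dn (Suc n) u x = vector_derivative (dn n u) (at x within {0..1})"
  by (simp add: dn_def)

lemma smooth_hvd: "smooth01 u \<Longrightarrow> x \<in> {0..1} \<Longrightarrow>
   (dn n u has_vector_derivative dn (Suc n) u x) (at x within {0..1})"
  by (simp add: smooth01_def)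

lemma smooth_cont: "smooth01 u \<Longrightarrow> continuous_on {0..1} (dn n u)"
  using smooth_hvd has_vector_derivative_continuous continuous_on_eq_continuous_within by blast

lemma pascal_sum:
  fixes a b :: "nat \<Rightarrow> real"
  shows "(\<Sum>j\<le>n. real (n choose j) * (a (Suc (n-j)) * b j + a (n-j) * b (Suc j)))
       = (\<Sum>j\<le>Suc n. real (Suc n choose j) * (a (Suc n - j) * b j))"
proof -
  have e1: "(\<Sum>j\<le>Suc n. real (Suc n choose j) * (a (Suc n - j) * b j))
      = a (Suc n) * b 0 + (\<Sum>j\<le>n. real (Suc n choose Suc j) * (a (n - j) * b (Suc j)))"
    by (subst sum.atMost_Suc_shift) simp
  have e2: "(\<Sum>j\<le>n. real (Suc n choose Suc j) * (a (n - j) * b (Suc j)))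
       = (\<Sum>j\<le>n. real (n choose j) * (a (n - j) * b (Suc j)))
       + (\<Sum>j\<le>n. real (n choose Suc j) * (a (n - j) * b (Suc j)))"
    by (simp add: algebra_simps sum.distrib)
  have e3: "a (Suc n) * b 0 + (\<Sum>j\<le>n. real (n choose Suc j) * (a (n - j) * b (Suc j)))
      = (\<Sum>j\<le>Suc n. real (n choose j) * (a (Suc n - j) * b j))"
    by (subst sum.atMost_Suc_shift) simp
  have e4: "(\<Sum>j\<le>Suc n. real (n choose j) * (a (Suc n - j) * b j)) = (\<Sum>j\<le>n. real (n choose j) * (a (Suc (n - j)) * b j))"
    unfolding sum.atMost_Suc by (simp add: Suc_diff_le)
  show ?thesis using e1 e2 e3 e4 by (simp add: algebra_simps sum.distrib)
qed

definition LL :: "(real \<Rightarrow> real) \<Rightarrow> (real \<Rightarrow> real) \<Rightarrow> nat \<Rightarrow> real \<Rightarrow> real" where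
  "LL f u n x = (\<Sum>j\<le>n. real (n choose j) * (dn (n-j) f x * dn j u x))"

lemma LL_hvd:
  assumes f: "smooth01 f" and u: "smooth01 u" and x: "x \<in> {0..1}"
  shows "(LL f u n has_vector_derivative LL f u (Suc n) x) (at x within {0..1})"
proof -
  have "((\<lambda>y. \<Sum>j\<le>n. real (n choose j) * (dn (n-j) f y * dn j u y)) has_real_derivative
      (\<Sum>j\<le>n. real (n choose j) * (dn (Suc (n-j)) f x * dn j u x + dn (n-j) f x * dn (Suc j) u x)))
      (at x within {0..1})"
    apply (intro derivative_eq_intros)
    using smooth_hvd[OF f x] smooth_hvd[OF u x]
    by (auto simp: has_real_derivative_iff_has_vector_derivative algebra_simps)
  then show ?thesis
    unfolding LL_def has_real_derivative_iff_has_vector_derivative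
    using pascal_sum[of n "\<lambda>i. dn i f x" "\<lambda>i. dn i u x"] by simp
qed

lemma leibniz:
  assumes f: "smooth01 f" and u: "smooth01 u"
  shows "\<forall>x\<in>{0..1}. dn n (\<lambda>x. f x * u x) x = LL f u n x"
proof (induction n)
  case 0 then show ?case by (simp add: LL_def)
next
  case (Suc n)
  show ?case
  proof
    fix x :: real assume x: "x \<in> {0..1}"
    have "(dn n (\<lambda>x. f x * u x) has_vector_derivative LL f u (Suc n) x) (at x within {0..1})"
      by (rule has_vector_derivative_transform[OF x _ LL_hvd[OF f u x]]) (use Suc in auto)
    then show "dn (Suc n) (\<lambda>x. f x * u x) x = LL f u (Suc n) x"
      unfolding dn_Suc using x by (intro vector_derivative_within_closed_interval) auto
  qed
qed

lemma smooth_mult: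
  assumes f: "smooth01 f" and u: "smooth01 u"
  shows "smooth01 (\<lambda>x. f x * u x)"
  unfolding smooth01_def
proof (intro allI ballI)
  fix n and x :: real assume x: "x \<in> {0..1}"
  have "(dn n (\<lambda>x. f x * u x) has_vector_derivative LL f u (Suc n) x) (at x within {0..1})"
    by (rule has_vector_derivative_transform[OF x _ LL_hvd[OF f u x]]) (use leibniz[OF f u] in auto)
  then show "(dn n (\<lambda>x. f x * u x) has_vector_derivative dn (Suc n) (\<lambda>x. f x * u x) x) (at x within {0..1})"
    using leibniz[OF f u] x by simp
qed



lemma fact_mult_le: "fact a * fact b \<le> (fact (a+b) :: real)"
proof -
  have "fact a * fact b * real ((a+b) choose a) = (fact (a+b) :: real)"
    using binomial_fact_lemma[of a "a+b"] by (metis add_diff_cancel_left' le_add1 of_nat_fact of_nat_mult)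
  moreover have "real ((a+b) choose a) \<ge> 1" by (simp add: Suc_le_eq)
  moreover have "fact a * fact b \<ge> (0::real)" by simp
  ultimately show ?thesis by (metis mult_le_cancel_left1 mult.commute  order.trans  mult_right_mono linorder_not_le not_less_iff_gr_or_eq)
qed

lemma algL:
  fixes s s' C F G H c N :: real
  assumes "F>0" "G>0" "H>0" "c>0" "s'>0"
  shows "s^(2*(j+m))/((F*G*c)^2*H^2) * N * (c*(C/s'^m*G^2))^2 = s^(2*j)*(s/s')^(2*m)/F^2 * (C^2*N*(G/H)^2)"
  using assms by (simp add: power_add power_mult_distrib power_divide field_simps power2_eq_square power_mult)

lemma algR:
  fixes s s' C F E N X :: real
  assumes "F>0" "s'>0" "E > 0"
  shows "((C+1) * X * (s/s')^m)^2 * (s^(2*j)/(F^2*E^2) * N)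
     = s^(2*j)*(s/s')^(2*m)/F^2 * ((C+1)^2 * (X^2 * N) * (1/E)^2)"
  using assms by (simp add: power_add power_mult_distrib power_divide field_simps power2_eq_square power_mult)

lemma coef0:
  fixes \<sigma> \<sigma>' C :: real
  assumes "0<\<sigma>" "\<sigma><\<sigma>'" "0 \<le> C" "kl \<le> 3" "n = j + m"
  shows "\<sigma>^(2*n)/((fact n)^2*(fact (n+1))^2) * real n^kl * (real (n choose j) * (C/\<sigma>'^(n-j)*(fact (n-j))^2))^2
   \<le> ((C+1) * (real (n-j)+1)^2 * (\<sigma>/\<sigma>')^(n-j))^2 * (\<sigma>^(2*j)/((fact j)^2*(fact (j+1))^2) * (max 1 (real j))^kl)"
proof -
  note n = assms(5)
  define F :: real where "F = fact j"
  define G :: real where "G = fact m"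
  define H :: real where "H = fact (n+1)"
  define c :: real where "c = real (n choose j)"
  have Fp: "F > 0" and Gp: "G > 0" and Hp: "H > 0" unfolding F_def G_def H_def by auto
  have cp: "c > 0" unfolding c_def using n by simp
  have fn: "fact n = F * G * c"
    unfolding F_def G_def c_def using binomial_fact_lemma[of j n] n
    by (metis add_diff_cancel_left' le_add1 of_nat_fact of_nat_mult)
  have s1: "\<sigma>'>0" using assms by simp
  define P where "P = \<sigma>^(2*j) * (\<sigma>/\<sigma>')^(2*m) / F^2"
  have P0: "P \<ge> 0" unfolding P_def using assms by simp
  have nm: "n - j = m" using n by simp
  have L: "\<sigma>^(2*n)/((fact n)^2*(fact (n+1))^2) * real n^kl * (real (n choose j) * (C/\<sigma>'^(n-j)*(fact (n-j))^2))^2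
     = P * (C^2 * real n^kl * (G/H)^2)"
    unfolding P_def fn nm H_def[symmetric] c_def[symmetric] G_def[symmetric]
    using algL[OF Fp Gp Hp cp s1, of \<sigma> j m "real n^kl" C] by (simp add: n)
  have R: "((C+1) * (real (n-j)+1)^2 * (\<sigma>/\<sigma>')^(n-j))^2 * (\<sigma>^(2*j)/((fact j)^2*(fact (j+1))^2) * (max 1 (real j))^kl)
     = P * ((C+1)^2 * ((real m+1)^4 * (max 1 (real j))^kl) * (1/fact (j+1))^2)"
    unfolding P_def nm F_def[symmetric]
    using algR[OF Fp s1, of "fact (j+1)" C "(real m+1)^2" \<sigma> m j "(max 1 (real j))^kl"]
    by (simp add: power_mult[symmetric])
  have q1: "G/H \<le> 1/fact (j+1)"
  proof -
    define E :: real where "E = fact (j+1)"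
    have Ep: "E > 0" unfolding E_def by simp
    have "E * G \<le> H" using fact_mult_le[of "j+1" m] unfolding E_def G_def H_def n by (simp add: add_ac)
    then have "G/H \<le> 1/E" using Ep Gp Hp by (simp add: divide_simps mult.commute)
    then show ?thesis unfolding E_def .
  qed
  have q2: "real n^kl \<le> (real m+1)^4 * (max 1 (real j))^kl"
  proof -
    have "real n \<le> (real m+1) * max 1 (real j)"
    proof (cases "j = 0")
      case True then show ?thesis using n by simp
    next
      case False
      then have "real j \<ge> 1" by simp
      then have "(real m+1) * max 1 (real j) = real m * real j + real j" by (simp add: algebra_simps max_def)
      moreover have "real m * real j \<ge> real m" using \<open>real j \<ge> 1\<close> by (simp add: mult_le_cancel_left1)
      ultimately show ?thesis using n by simp
    qed
    then have "real n^kl \<le> ((real m+1) * max 1 (real j))^kl" by (simp add: power_mono)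
    also have "\<dots> = (real m+1)^kl * (max 1 (real j))^kl" by (simp add: power_mult_distrib)
    also have "\<dots> \<le> (real m+1)^4 * (max 1 (real j))^kl"
      using assms(4) by (intro mult_right_mono power_increasing) auto
    finally show ?thesis .
  qed
  have q3: "C^2 \<le> (C+1)^2" using assms(3) by (simp add: power_mono)
  have "C^2 * real n^kl * (G/H)^2 \<le> (C+1)^2 * ((real m+1)^4 * (max 1 (real j))^kl) * (1/fact (j+1))^2"
    using Gp Hp
    by (intro mult_mono q3 q2 power_mono q1) auto
  then show ?thesis unfolding L R using P0 by (rule mult_left_mono)
qed

lemma coef:
  fixes \<sigma> \<sigma>' C :: real
  assumes "0<\<sigma>" "\<sigma><\<sigma>'" "0 \<le> C" "kl \<le> 3" "j \<le> n"
  shows "\<sigma>^(2*n)/((fact n)^2*(fact (n+1))^2) * real n^kl * (real (n choose j) * (C/\<sigma>'^(n-j)*(fact (n-j))^2))^2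
   \<le> ((C+1) * (real (n-j)+1)^2 * (\<sigma>/\<sigma>')^(n-j))^2 * (\<sigma>^(2*j)/((fact j)^2*(fact (j+1))^2) * (max 1 (real j))^kl)"
  using coef0[OF assms(1-4), of n j "n-j"] assms(5) by simp

lemma summable_b:
  fixes q K :: real
  assumes "0 < q" "q < 1"
  shows "summable (\<lambda>m. K * (real m+1)^2 * q^m)"
proof -
  define r where "r = sqrt q"
  have r: "0 < r" "r < 1" "q = r*r" using assms unfolding r_def by (auto simp: real_sqrt_lt_1_iff)
  have "((\<lambda>m. (real m+1)^2 * r^m) \<longlongrightarrow> 0) at_top" using r(1,2) by real_asymp
  then have "eventually (\<lambda>m. (real m+1)^2 * r^m < 1) at_top"
    by (rule order_tendstoD) simp
  then obtain N where N: "\<And>m. m \<ge> N \<Longrightarrow> (real m+1)^2 * r^m < 1"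
    by (auto simp: eventually_at_top_linorder)
  have "summable (\<lambda>m. (real m+1)^2 * q^m)"
  proof (rule summable_comparison_test')
    show "summable (\<lambda>m. r^m)" using r by (simp add: summable_geometric)
    fix m assume "m \<ge> N"
    have "(real m+1)^2 * q^m = ((real m+1)^2 * r^m) * r^m" using r by (simp add: power_mult_distrib)
    also have "\<dots> \<le> 1 * r^m" using N[OF \<open>m\<ge>N\<close>] r by (intro mult_right_mono) auto
    finally show "norm ((real m+1)^2 * q^m) \<le> r^m" using assms by simp
  qed
  then show ?thesis using summable_mult[of _ K] by (simp add: mult.assoc)
qed

lemma weighted_cs:
  fixes a b :: "nat \<Rightarrow> real"
  assumes "\<And>j. j \<in> J \<Longrightarrow> b j > 0"
  shows "(\<Sum>j\<in>J. a j)^2 \<le> (\<Sum>j\<in>J. b j) * (\<Sum>j\<in>J. (a j)^2 / b j)"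
proof -
  have "(\<Sum>j\<in>J. a j)^2 = (\<Sum>j\<in>J. sqrt (b j) * (a j / sqrt (b j)))^2"
  proof -
    have "\<And>j. j \<in> J \<Longrightarrow> a j = sqrt (b j) * (a j / sqrt (b j))"
      using assms by (metis less_numeral_extra(3) nonzero_mult_div_cancel_left real_sqrt_eq_zero_cancel_iff times_divide_eq_right)
    then show ?thesis by simp
  qed
  also have "\<dots> \<le> (\<Sum>j\<in>J. (sqrt (b j))^2) * (\<Sum>j\<in>J. (a j / sqrt (b j))^2)"
    by (rule Cauchy_Schwarz_ineq_sum)
  also have "\<dots> = (\<Sum>j\<in>J. b j) * (\<Sum>j\<in>J. (a j)^2 / b j)"
  proof -
    have "\<And>j. j \<in> J \<Longrightarrow> (sqrt (b j))^2 = b j \<and> (a j / sqrt (b j))^2 = (a j)^2 / b j"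
      using assms by (auto simp: power_divide less_imp_le)
    then show ?thesis by simp
  qed
  finally show ?thesis .
qed



lemma gev_bound:
  assumes "gevrey_regular \<sigma>' 2 f" "\<sigma>' > 0"
  obtains Cf where "Cf \<ge> 0" "\<And>n x. x \<in> {0..1} \<Longrightarrow> \<bar>dn n f x\<bar> \<le> Cf / \<sigma>'^n * (fact n)^2"
proof -
  from assms(1) obtain C where sm: "smooth01 f" and
    C: "\<And>n x. x\<in>{0<..<1::real} \<Longrightarrow> \<bar>dn n f x\<bar> \<le> C * \<sigma>' powr (- real n) * (fact n) powr 2"
    unfolding gevrey_regular_def by blast
  have b: "\<bar>dn n f x\<bar> \<le> \<bar>C\<bar> / \<sigma>'^n * (fact n)^2" if x: "x\<in>{0..1}" for n x
  proof -
    have ob: "\<bar>dn n f y\<bar> \<le> \<bar>C\<bar> / \<sigma>'^n * (fact n)^2" if y: "y \<in> {0<..<1::real}" for y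
    proof -
      have e1: "\<sigma>' powr (- real n) = 1 / \<sigma>'^n" using assms(2) by (simp add: powr_minus powr_realpow divide_inverse)
      have e2: "(fact n :: real) powr 2 = (fact n)^2"
        by (simp add: powr_numeral)
      have "\<bar>dn n f y\<bar> \<le> C * (1/\<sigma>'^n) * (fact n)^2" using C[OF y, of n] unfolding e1 e2 .
      also have "\<dots> \<le> \<bar>C\<bar> * (1/\<sigma>'^n) * (fact n)^2"
        using assms(2) by (intro mult_right_mono) simp_all
      finally show ?thesis by simp
    qed
    have co: "continuous_on (closure {0<..<1::real}) (\<lambda>y. \<bar>dn n f y\<bar>)"
      unfolding closure_greaterThanLessThan[OF zero_less_one] by (auto intro!: continuous_intros smooth_cont[OF sm])
    have cl: "x \<in> closure {0<..<1::real}" using x by simp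
    show ?thesis by (rule continuous_le_on_closure[OF co cl ob])
  qed
  show ?thesis by (rule that[of "\<bar>C\<bar>"]) (simp, rule b)
qed


lemma w_int:
  assumes "smooth01 v" "\<sigma> > 0"
  shows "(\<lambda>x. (x/\<sigma>)^k * (dn j v x)^2) integrable_on {0..1::real}"
  by (rule integrable_continuous_interval) (use smooth_cont[OF assms(1)] assms(2) in \<open>auto intro!: continuous_intros\<close>)

lemma w_nonneg:
  assumes "smooth01 v" "\<sigma> > 0"
  shows "0 \<le> integral {0..1::real} (\<lambda>x. (x/\<sigma>)^k * (dn j v x)^2)"
  by (rule integral_nonneg[OF w_int[OF assms]]) (use assms(2) in auto)

lemma sum_rev_atMost: "(\<Sum>j\<le>n. b (n - j)) = (\<Sum>j\<le>n. (b j :: real))" for b :: "nat \<Rightarrow> real"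
  using sum.nat_diff_reindex[of b "Suc n"] by (simp add: lessThan_Suc_atMost)



theorem mainTheorem4:
  fixes \<sigma> \<sigma>' :: real and k l :: nat and f :: "real \<Rightarrow> real"
  assumes "\<sigma> > 0" "k \<le> 2" "l \<le> 1" "\<sigma>' > \<sigma>"
    and "gevrey_regular \<sigma>' 2 f"
  shows "\<exists>C. \<forall>u. inG \<sigma> k l u \<longrightarrow>
           inG \<sigma> k l (\<lambda>x. f x * u x) \<and> gnorm \<sigma> k l (\<lambda>x. f x * u x) \<le> C * gnorm \<sigma> k l u"
proof -
  have s0: "\<sigma> > 0" and s1: "\<sigma>' > 0" and kl: "k + l \<le> 3" using assms by auto
  have fs: "smooth01 f" using assms(5) unfolding gevrey_regular_def by blast
  obtain Cf where Cf0: "Cf \<ge> 0" and Cf: "\<And>n x. x \<in> {0..1} \<Longrightarrow> \<bar>dn n f x\<bar> \<le> Cf / \<sigma>'^n * (fact n)^2"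
    using gev_bound[OF assms(5) s1] by blast
  define q where "q = \<sigma>/\<sigma>'"
  have q: "0 < q" "q < 1" using assms unfolding q_def by auto
  define b where "b m = (Cf+1) * (real m+1)^2 * q^m" for m
  have bpos: "b m > 0" for m unfolding b_def using q Cf0 by auto
  have bsum: "summable b" unfolding b_def using summable_b[OF q] .
  define B where "B = suminf b"
  have B0: "B \<ge> 0" unfolding B_def using bsum bpos by (intro suminf_nonneg) (auto intro: less_imp_le)
  define A where "A n = \<sigma>^(2*n)/((fact n)^2*(fact (n+1))^2) * real n^(k+l)" for n
  define A' where "A' j = \<sigma>^(2*j)/((fact j)^2*(fact (j+1))^2) * (max 1 (real j))^(k+l)" for j
  define c where "c n j = real (n choose j) * (Cf/\<sigma>'^(n-j)*(fact (n-j))^2)" for n j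
  have coefA: "A n * (c n j)^2 \<le> (b (n-j))^2 * A' j" if "j \<le> n" for n j
    unfolding A_def A'_def b_def c_def q_def using coef[OF s0 assms(4) Cf0 kl that] .
  have A0: "A n \<ge> 0" for n unfolding A_def using s0 by simp
  have A'0: "A' j \<ge> 0" for j unfolding A'_def using s0 by simp
  have gt: "gterm \<sigma> k l v n = A n * integral {0..1} (\<lambda>x. (x/\<sigma>)^k * (dn n v x)^2)" for v n
    unfolding gterm_def A_def by simp
  define C where "C = 2*B + Cf"
  show ?thesis
  proof (intro exI allI impI)
    fix u assume uG: "inG \<sigma> k l u"
    have us: "smooth01 u" and usum: "summable (gterm \<sigma> k l u)" using uG unfolding inG_def by auto
    define fu where "fu = (\<lambda>x. f x * u x)"
    have fus: "smooth01 fu" unfolding fu_def by (rule smooth_mult[OF fs us])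
    define I where "I j = integral {0..1} (\<lambda>x. (x/\<sigma>)^k * (dn j u x)^2)" for j
    have I0: "I j \<ge> 0" for j unfolding I_def by (rule w_nonneg[OF us s0])
    define y where "y j = A' j * I j" for j
    have y0: "y j \<ge> 0" for j unfolding y_def using A'0 I0 by simp
    have gu0: "gterm \<sigma> k l u j \<ge> 0" for j unfolding gt using A0 w_nonneg[OF us s0] by simp
    have gfu0: "gterm \<sigma> k l fu j \<ge> 0" for j unfolding gt using A0 w_nonneg[OF fus s0] by simp
    define S where "S = suminf (gterm \<sigma> k l u)"
    have S0: "S \<ge> 0" unfolding S_def using usum gu0 by (rule suminf_nonneg)

    have pw: "A n * (dn n fu x)^2 \<le> B * (\<Sum>j\<le>n. b (n-j) * (A' j * (dn j u x)^2))"
      if x: "x \<in> {0..1}" for n x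
    proof -
      have eqL: "dn n fu x = LL f u n x" using leibniz[OF fs us] x unfolding fu_def by blast
      have abs_le: "\<bar>dn n fu x\<bar> \<le> (\<Sum>j\<le>n. c n j * \<bar>dn j u x\<bar>)"
      proof -
        have "\<bar>LL f u n x\<bar> \<le> (\<Sum>j\<le>n. \<bar>real (n choose j) * (dn (n-j) f x * dn j u x)\<bar>)"
          unfolding LL_def by (rule sum_abs)
        also have "\<dots> \<le> (\<Sum>j\<le>n. c n j * \<bar>dn j u x\<bar>)"
        proof (rule sum_mono)
          fix j
          have h: "\<bar>dn (n-j) f x\<bar> \<le> Cf/\<sigma>'^(n-j)*(fact(n-j))^2" by (rule Cf[OF x])
          have "\<bar>real (n choose j) * (dn (n-j) f x * dn j u x)\<bar>
              = real (n choose j) * (\<bar>dn (n-j) f x\<bar> * \<bar>dn j u x\<bar>)" by (simp add: abs_mult)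
          also have "\<dots> \<le> real (n choose j) * ((Cf/\<sigma>'^(n-j)*(fact(n-j))^2) * \<bar>dn j u x\<bar>)"
            by (intro mult_left_mono mult_right_mono h) auto
          finally show "\<bar>real (n choose j) * (dn (n-j) f x * dn j u x)\<bar> \<le> c n j * \<bar>dn j u x\<bar>"
            unfolding c_def by (simp add: mult.assoc)
        qed
        finally show ?thesis using eqL by simp
      qed
      define T where "T = (\<Sum>j\<le>n. (c n j * \<bar>dn j u x\<bar>)^2 / b (n-j))"
      have T0: "T \<ge> 0" unfolding T_def using bpos by (intro sum_nonneg divide_nonneg_nonneg) (auto intro: less_imp_le)
      have "(dn n fu x)^2 = \<bar>dn n fu x\<bar>^2" by simp
      also have "\<dots> \<le> (\<Sum>j\<le>n. c n j * \<bar>dn j u x\<bar>)^2"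
        using abs_le by (intro power_mono) auto
      also have "\<dots> \<le> (\<Sum>j\<le>n. b (n-j)) * T"
        unfolding T_def by (rule weighted_cs) (use bpos in auto)
      also have "\<dots> \<le> B * T"
      proof (intro mult_right_mono T0)
        show "(\<Sum>j\<le>n. b (n-j)) \<le> B"
          unfolding B_def sum_rev_atMost by (rule sum_le_suminf[OF bsum]) (auto intro: less_imp_le bpos)
      qed
      finally have d1: "(dn n fu x)^2 \<le> B * T" .
      have "A n * T = (\<Sum>j\<le>n. (A n * (c n j)^2) * (dn j u x)^2 / b (n-j))"
        unfolding T_def sum_distrib_left by (intro sum.cong) (auto simp: power_mult_distrib)
      also have "\<dots> \<le> (\<Sum>j\<le>n. b (n-j) * (A' j * (dn j u x)^2))"
      proof (rule sum_mono)
        fix j assume "j \<in> {..n}"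
        then have "A n * (c n j)^2 \<le> (b (n-j))^2 * A' j" by (intro coefA) auto
        then have "(A n * (c n j)^2) * (dn j u x)^2 \<le> ((b (n-j))^2 * A' j) * (dn j u x)^2"
          by (rule mult_right_mono) simp
        then show "(A n * (c n j)^2) * (dn j u x)^2 / b (n-j) \<le> b (n-j) * (A' j * (dn j u x)^2)"
          using bpos[of "n-j"] by (simp add: divide_simps power2_eq_square mult_ac)
      qed
      finally have d2: "A n * T \<le> (\<Sum>j\<le>n. b (n-j) * (A' j * (dn j u x)^2))" .
      have "A n * (dn n fu x)^2 \<le> A n * (B * T)" using d1 A0 by (rule mult_left_mono)
      also have "\<dots> = B * (A n * T)" by simp
      also have "\<dots> \<le> B * (\<Sum>j\<le>n. b (n-j) * (A' j * (dn j u x)^2))" using d2 B0 by (rule mult_left_mono)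
      finally show ?thesis .
    qed

    have gfu: "gterm \<sigma> k l fu n \<le> B * (\<Sum>j\<le>n. y j * b (n-j))" for n
    proof -
      have int1: "((\<lambda>x. A n * ((x/\<sigma>)^k * (dn n fu x)^2)) has_integral
          A n * integral {0..1} (\<lambda>x. (x/\<sigma>)^k * (dn n fu x)^2)) {0..1}"
        by (intro has_integral_mult_right integrable_integral w_int[OF fus s0])
      have int2: "((\<lambda>x. B * (\<Sum>j\<le>n. b (n-j) * (A' j * ((x/\<sigma>)^k * (dn j u x)^2)))) has_integral
          B * (\<Sum>j\<le>n. b (n-j) * (A' j * I j))) {0..1}"
        unfolding I_def
        by (intro has_integral_mult_right has_integral_sum finite_atMost integrable_integral w_int[OF us s0])
      have "A n * integral {0..1} (\<lambda>x. (x/\<sigma>)^k * (dn n fu x)^2) \<le> B * (\<Sum>j\<le>n. b (n-j) * (A' j * I j))"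
      proof (rule has_integral_le[OF int1 int2])
        fix x :: real assume x: "x \<in> {0..1}"
        have w0: "(x/\<sigma>)^k \<ge> 0" using x s0 by simp
        have "A n * ((x/\<sigma>)^k * (dn n fu x)^2) = (x/\<sigma>)^k * (A n * (dn n fu x)^2)" by simp
        also have "\<dots> \<le> (x/\<sigma>)^k * (B * (\<Sum>j\<le>n. b (n-j) * (A' j * (dn j u x)^2)))"
          using pw[OF x] w0 by (rule mult_left_mono)
        also have "\<dots> = B * (\<Sum>j\<le>n. b (n-j) * (A' j * ((x/\<sigma>)^k * (dn j u x)^2)))"
          by (simp add: sum_distrib_left mult_ac)
        finally show "A n * ((x/\<sigma>)^k * (dn n fu x)^2) \<le> B * (\<Sum>j\<le>n. b (n-j) * (A' j * ((x/\<sigma>)^k * (dn j u x)^2)))" .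
      qed
      then show ?thesis unfolding gt y_def by (simp add: mult_ac)
    qed

    define e where "e j = (if j = 0 then I j else 0)" for j
    have esums: "e sums I 0" unfolding e_def using sums_single[of 0 I] .
    have yle: "y j \<le> gterm \<sigma> k l u j + e j" for j
    proof (cases "j = 0")
      case True
      then show ?thesis unfolding y_def e_def A'_def using gu0[of 0] by simp
    next
      case False
      then have "A' j = A j" unfolding A'_def A_def by (simp add: max_def)
      then show ?thesis unfolding y_def e_def gt I_def using False by simp
    qed
    have gesum: "summable (\<lambda>j. gterm \<sigma> k l u j + e j)"
      using usum esums by (intro summable_add) (auto simp: sums_iff)
    have ysum: "summable y"
      by (rule summable_comparison_test'[OF gesum]) (use y0 yle in auto)
    have ySle: "suminf y \<le> S + I 0"
    proof -
      have "suminf y \<le> (\<Sum>j. gterm \<sigma> k l u j + e j)"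
        by (rule suminf_le[OF yle ysum gesum])
      also have "\<dots> = S + I 0" unfolding S_def using suminf_add[OF usum, of e] esums
        by (simp add: sums_iff)
      finally show ?thesis .
    qed
    have ny: "summable (\<lambda>k. norm (y k))" using ysum y0 by simp
    have nb: "summable (\<lambda>k. norm (b k))" using bsum bpos by (simp add: less_imp_le)
    have cpe: "suminf y * suminf b = (\<Sum>k. \<Sum>i\<le>k. y i * b (k - i))"
      by (rule Cauchy_product[OF ny nb])
    have cps: "summable (\<lambda>k. \<Sum>i\<le>k. y i * b (k - i))"
      by (rule summable_Cauchy_product[OF ny nb])
    have gfsum: "summable (gterm \<sigma> k l fu)"
      by (rule summable_comparison_test'[OF summable_mult[OF cps, of B]]) (use gfu gfu0 in auto)
    have gfS: "suminf (gterm \<sigma> k l fu) \<le> B^2 * (S + I 0)"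
    proof -
      have "suminf (gterm \<sigma> k l fu) \<le> (\<Sum>n. B * (\<Sum>i\<le>n. y i * b (n - i)))"
        by (rule suminf_le[OF gfu gfsum summable_mult[OF cps]])
      also have "\<dots> = B * (suminf y * B)" unfolding cpe B_def using suminf_mult[OF cps] by simp
      also have "\<dots> \<le> B * ((S + I 0) * B)" using ySle B0 by (intro mult_left_mono mult_right_mono) auto
      finally show ?thesis by (simp add: power2_eq_square mult_ac)
    qed
    have semi: "gseminorm \<sigma> k l fu \<le> B * (sqrt S + sqrt (I 0))"
    proof -
      have "gseminorm \<sigma> k l fu \<le> sqrt (B^2 * (S + I 0))"
        unfolding gseminorm_def by (rule real_sqrt_le_mono[OF gfS])
      also have "\<dots> = B * sqrt (S + I 0)" using B0 by (simp add: real_sqrt_mult)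
      also have "\<dots> \<le> B * (sqrt S + sqrt (I 0))"
        using B0 S0 I0 by (intro mult_left_mono sqrt_add_le_add_sqrt) auto
      finally show ?thesis .
    qed
    define J where "J = integral {0..1} (\<lambda>x. (x/\<sigma>)^k * (fu x)^2)"
    have I0u: "I 0 = integral {0..1} (\<lambda>x. (x/\<sigma>)^k * (u x)^2)" unfolding I_def by simp
    have Jle: "sqrt J \<le> Cf * sqrt (I 0)"
    proof -
      have "J \<le> integral {0..1} (\<lambda>x. Cf^2 * ((x/\<sigma>)^k * (u x)^2))"
        unfolding J_def
      proof (rule integral_le)
        show "(\<lambda>x. (x/\<sigma>)^k * (fu x)^2) integrable_on {0..1}"
          using w_int[OF fus s0, of k 0] by simp
        show "(\<lambda>x. Cf^2 * ((x/\<sigma>)^k * (u x)^2)) integrable_on {0..1}"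
          using integrable_on_mult_right[OF w_int[OF us s0, of k 0], of "Cf^2"] by simp
        fix x :: real assume x: "x \<in> {0..1}"
        have fx: "\<bar>f x\<bar> \<le> Cf" using Cf[OF x, of 0] by simp
        have "(fu x)^2 = (f x)^2 * (u x)^2" unfolding fu_def by (simp add: power_mult_distrib)
        also have "\<dots> \<le> Cf^2 * (u x)^2"
        proof (rule mult_right_mono)
          show "(f x)^2 \<le> Cf^2" using fx by (metis abs_ge_zero power2_abs power_mono)
        qed simp
        finally have "(fu x)^2 \<le> Cf^2 * (u x)^2" .
        then have "(x/\<sigma>)^k * (fu x)^2 \<le> (x/\<sigma>)^k * (Cf^2 * (u x)^2)"
          using x s0 by (intro mult_left_mono) auto
        then show "(x/\<sigma>)^k * (fu x)^2 \<le> Cf^2 * ((x/\<sigma>)^k * (u x)^2)" by (simp add: mult_ac)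
      qed
      also have "\<dots> = Cf^2 * I 0" unfolding I0u by simp
      finally have "sqrt J \<le> sqrt (Cf^2 * I 0)" by (rule real_sqrt_le_mono)
      also have "\<dots> = Cf * sqrt (I 0)" using Cf0 by (simp add: real_sqrt_mult)
      finally show ?thesis .
    qed
    have sqS: "sqrt S \<ge> 0" "sqrt (I 0) \<ge> 0" using S0 I0 by auto
    have main: "inG \<sigma> k l fu \<and> gnorm \<sigma> k l fu \<le> C * gnorm \<sigma> k l u"
    proof
      show "inG \<sigma> k l fu" unfolding inG_def using fus gfsum by simp
      show "gnorm \<sigma> k l fu \<le> C * gnorm \<sigma> k l u"
      proof (cases "k + l = 0")
        case True
        have "I 0 = gterm \<sigma> k l u 0" unfolding gt A_def I_def using True by simp
        also have "\<dots> \<le> S" unfolding S_def using sum_le_suminf[OF usum, of "{0}"] gu0 by simp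
        finally have "sqrt (I 0) \<le> sqrt S" by (rule real_sqrt_le_mono)
        then have "gnorm \<sigma> k l fu \<le> B * (sqrt S + sqrt S)"
          using semi True B0 unfolding gnorm_def
          by (smt (verit) mult_left_mono)
        also have "\<dots> \<le> C * sqrt S" unfolding C_def using Cf0 sqS by (simp add: algebra_simps)
        finally show ?thesis unfolding gnorm_def gseminorm_def S_def using True by simp
      next
        case False
        have "gnorm \<sigma> k l fu = gseminorm \<sigma> k l fu + sqrt J" by (simp only: gnorm_def J_def if_not_P[OF False])
        also have "\<dots> \<le> B * (sqrt S + sqrt (I 0)) + Cf * sqrt (I 0)" using semi Jle by simp
        also have "\<dots> \<le> C * (sqrt S + sqrt (I 0))" unfolding C_def using Cf0 B0 sqS
          by (simp add: algebra_simps)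
        also have "\<dots> = C * gnorm \<sigma> k l u" by (simp only: gnorm_def gseminorm_def S_def I0u if_not_P[OF False])
        finally show ?thesis .
      qed
    qed
    then show "inG \<sigma> k l (\<lambda>x. f x * u x) \<and> gnorm \<sigma> k l (\<lambda>x. f x * u x) \<le> C * gnorm \<sigma> k l u"
      unfolding fu_def .
  qed
qed


end
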